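(* Let $X=[\mathbf x_1,\ldots,\mathbf x_p]\in\mathbb R^{n\times p}$ with $\|\mathbf x_i\|_2\neq0$ for all $i$, $\mathbf y\in\mathbb R^n$, $\lambda\ge0$, and $f(\boldsymbol\beta)=\frac12\|X\boldsymbol\beta-\mathbf y\|_2^2+\lambda\|\boldsymbol\beta\|_1$. Generate sequences as follows. Set $\mathbf s^0=\mathbf 0$ and $\boldsymbol\beta^0=\mathbf 0$. For $k=1,2,\ldots$: first compute $\boldsymbol\beta^k$ by one cyclic pass of coordinate descent started from $\mathbf s^{k-1}$, i.e. for $i=1,\ldots,p$, $$\beta_i^k=\arg\min_{\beta\in\mathbb R} f([\beta_1^k,\ldots,\beta_{i-1}^k,\beta,s_{i+1}^{k-1},\ldots,s_p^{k-1}]^T);$$ then set a history point $\mathbf h^k$, where either $\mathbf h^k=\mathbf s^{k-1}$ for all $k$ (scheme CD+SRRC) or $\mathbf h^k=\boldsymbol\beta^{k-1}$ for all $k$ (scheme CD+SRRT); let $\alpha^k$ be a minimizer over $\alpha\in\mathbb R$ of $f((1-\alpha)\mathbf h^k+\alpha\boldsymbol\beta^k)$, and set $\mathbf s^k=(1-\alpha^k)\mathbf h^k+\alpha^k\boldsymbol\beta^k$. Then for either scheme, for all $k\ge1$, $$f(\mathbf s^{k-1})\ge f(\boldsymbol\beta^k)\ge f(\mathbf s^k)\ge f(\boldsymbol\beta^{k+1}).$$ Moreover, if $f(\mathbf s^{k-1})=f(\boldsymbol\beta^k)$, then $\mathbf s^{k-1}=\boldsymbol\beta^k$ and $f(\boldsymbol\beta^k)=\min_{\boldsymbol\beta}f(\boldsymbol\beta)$.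 Consequently, $\lim_{k\to\infty}f(\boldsymbol\beta^k)=\min_{\boldsymbol\beta}f(\boldsymbol\beta)$.
   Context: The coordinate update has the closed form $\beta_i^k=S(\mathbf x_i^T\mathbf y-\sum_{j<i}\mathbf x_i^T\mathbf x_j\beta_j^k-\sum_{j>i}\mathbf x_i^T\mathbf x_j s_j^{k-1},\lambda)/\|\mathbf x_i\|_2^2$, where $S(x,\lambda)=x-\lambda$ if $x>\lambda$, $x+\lambda$ if $x<-\lambda$, and $0$ if $|x|\le\lambda$. *)

theory Defs
  imports "HOL-Analysis.Analysis"
begin

text \<open>Design matrix X has n rows and p columns: X :: real^'p^'n, so X *v beta :: real^'n.
  The coordinate index type 'p carries a linear order giving the cyclic order 1,...,p.\<close>

definition lasso_obj :: "real^'p^'n \<Rightarrow> real^'n \<Rightarrow> real \<Rightarrow> real^'p \<Rightarrow> real" where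
  "lasso_obj X y lam b = (1/2) * (norm (X *v b - y))\<^sup>2 + lam * (\<Sum>i\<in>UNIV. \<bar>b $ i\<bar>)"

definition cd_point :: "real^('p::{finite,linorder}) \<Rightarrow> ('p::{finite,linorder}) \<Rightarrow> real \<Rightarrow> real^('p::{finite,linorder}) \<Rightarrow> real^('p::{finite,linorder})" where
  "cd_point b i t s = (\<chi> j. if j < i then b $ j else if j = i then t else s $ j)"

end

theory Submission
  imports Defs
begin

lemma lo_nonneg: "lam \<ge> 0 \<Longrightarrow> 0 \<le> lasso_obj X y lam b"
  unfolding lasso_obj_def by (intro add_nonneg_nonneg mult_nonneg_nonneg sum_nonneg) auto

lemma quad_expand:
  fixes X :: "real^'p^'n"
  shows "(norm (X *v (a + v) - y))\<^sup>2 = (norm (X *v a - y))\<^sup>2 + 2 * inner (X *v a - y) (X *v v) + (norm (X *v v))\<^sup>2"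
proof -
  have e: "X *v (a + v) - y = (X *v a - y) + X *v v" by (simp add: matrix_vector_right_distrib)
  have "\<And>p w::real^'n. (norm (p + w))\<^sup>2 = (norm p)\<^sup>2 + 2 * inner p w + (norm w)\<^sup>2"
    by (simp add: power2_norm_eq_inner inner_add_left inner_add_right inner_commute)
  then show ?thesis unfolding e by blast
qed

lemma mv_axis: "(X::real^'p^'n) *v (c *\<^sub>R axis i 1) = c *\<^sub>R column i X"
  by (simp add: matrix_vector_mult_scaleR matrix_vector_mult_basis)

lemma midpoint_ineq:
  fixes X :: "real^'p^'n"
  assumes lam: "lam \<ge> 0"
  shows "lasso_obj X y lam ((1/2) *\<^sub>R (a + b)) \<le> (lasso_obj X y lam a + lasso_obj X y lam b)/2 - (norm (X *v (a - b)))\<^sup>2 / 8"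
proof -
  define p where "p = X *v a - y"
  define q where "q = X *v b - y"
  have e1: "X *v ((1/2) *\<^sub>R (a + b)) - y = (1/2) *\<^sub>R (p + q)"
    by (simp add: vec_eq_iff p_def q_def matrix_vector_mult_scaleR matrix_vector_right_distrib algebra_simps)
  have e2: "X *v (a - b) = p - q" by (simp add: p_def q_def matrix_vector_mult_diff_distrib)
  have par: "(norm ((1/2) *\<^sub>R (p + q)))\<^sup>2 = ((norm p)\<^sup>2 + (norm q)\<^sup>2)/2 - (norm (p - q))\<^sup>2/4"
    by (simp add: power2_norm_eq_inner inner_add_left inner_add_right inner_diff_left inner_diff_right inner_commute field_simps)
  have abs: "(\<Sum>i\<in>UNIV. \<bar>((1/2) *\<^sub>R (a + b)) $ i\<bar>) \<le> ((\<Sum>i\<in>UNIV. \<bar>a $ i\<bar>) + (\<Sum>i\<in>UNIV. \<bar>b $ i\<bar>))/2"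
  proof -
    have "(\<Sum>i\<in>UNIV. \<bar>((1/2) *\<^sub>R (a + b)) $ i\<bar>) \<le> (\<Sum>i\<in>UNIV. (\<bar>a $ i\<bar> + \<bar>b $ i\<bar>)/2)"
      by (intro sum_mono) (simp add: abs_triangle_ineq)
    also have "\<dots> = ((\<Sum>i\<in>UNIV. \<bar>a $ i\<bar>) + (\<Sum>i\<in>UNIV. \<bar>b $ i\<bar>))/2"
      by (simp only: sum_divide_distrib[symmetric] sum.distrib)
    finally show ?thesis .
  qed
  have "lam * (\<Sum>i\<in>UNIV. \<bar>((1/2) *\<^sub>R (a + b)) $ i\<bar>) \<le> lam * (((\<Sum>i\<in>UNIV. \<bar>a $ i\<bar>) + (\<Sum>i\<in>UNIV. \<bar>b $ i\<bar>))/2)"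
    using abs lam by (rule mult_left_mono)
  then have "lam * (\<Sum>i\<in>UNIV. \<bar>((1/2) *\<^sub>R (a + b)) $ i\<bar>) \<le> (lam * (\<Sum>i\<in>UNIV. \<bar>a $ i\<bar>) + lam * (\<Sum>i\<in>UNIV. \<bar>b $ i\<bar>))/2"
    by (simp add: distrib_left)
  moreover have "lasso_obj X y lam ((1/2) *\<^sub>R (a + b)) = 1/2 * (((norm p)\<^sup>2 + (norm q)\<^sup>2)/2 - (norm (p - q))\<^sup>2/4) + lam * (\<Sum>i\<in>UNIV. \<bar>((1/2) *\<^sub>R (a + b)) $ i\<bar>)"
    unfolding lasso_obj_def e1 par by simp
  moreover have "lasso_obj X y lam a = 1/2 * (norm p)\<^sup>2 + lam * (\<Sum>i\<in>UNIV. \<bar>a $ i\<bar>)"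
    unfolding lasso_obj_def p_def by simp
  moreover have "lasso_obj X y lam b = 1/2 * (norm q)\<^sup>2 + lam * (\<Sum>i\<in>UNIV. \<bar>b $ i\<bar>)"
    unfolding lasso_obj_def q_def by simp
  ultimately show ?thesis unfolding e2 by (simp add: field_simps)
qed


lemma cd_step:
  fixes X :: "real^('p::{finite,linorder})^'n"
  assumes lam: "lam \<ge> 0"
    and m: "\<forall>t. lasso_obj X y lam (cd_point b i (b$i) s) \<le> lasso_obj X y lam (cd_point b i t s)"
  shows "lasso_obj X y lam (cd_point b i (b$i) s) + (norm (column i X))\<^sup>2/4 * (b$i - s$i)\<^sup>2
           \<le> lasso_obj X y lam (cd_point b i (s$i) s)"
proof -
  define a where "a = cd_point b i (b$i) s"
  define c where "c = cd_point b i (s$i) s"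
  have mid: "(1/2) *\<^sub>R (a + c) = cd_point b i ((b$i + s$i)/2) s"
    by (auto simp: a_def c_def cd_point_def vec_eq_iff field_simps)
  have diff: "a - c = (b$i - s$i) *\<^sub>R axis i 1"
    by (auto simp: a_def c_def cd_point_def vec_eq_iff axis_def)
  have nx: "(norm (X *v (a - c)))\<^sup>2 = (norm (column i X))\<^sup>2 * (b$i - s$i)\<^sup>2"
    by (simp add: diff mv_axis power_mult_distrib)
  have "lasso_obj X y lam a \<le> lasso_obj X y lam (cd_point b i ((b$i + s$i)/2) s)"
    using m unfolding a_def by blast
  also have "\<dots> = lasso_obj X y lam ((1/2) *\<^sub>R (a + c))" using mid by simp
  also have "\<dots> \<le> (lasso_obj X y lam a + lasso_obj X y lam c)/2 - (norm (X *v (a - c)))\<^sup>2 / 8"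
    by (rule midpoint_ineq[OF lam])
  finally show ?thesis unfolding nx a_def[symmetric] c_def[symmetric] by (simp add: field_simps)
qed

lemma cd_telescope:
  fixes X :: "real^('p::{finite,linorder})^'n"
  assumes lam: "lam \<ge> 0"
    and cd: "\<forall>i t. lasso_obj X y lam (cd_point b i (b$i) s) \<le> lasso_obj X y lam (cd_point b i t s)"
    and c: "\<forall>i. c \<le> (norm (column i X))\<^sup>2/4"
  shows "lasso_obj X y lam b + c * (\<Sum>i\<in>UNIV. (b$i - s$i)\<^sup>2) \<le> lasso_obj X y lam s"
proof -
  have step: "lasso_obj X y lam (cd_point b i (b$i) s) + c * (b$i - s$i)\<^sup>2
           \<le> lasso_obj X y lam (cd_point b i (s$i) s)" for i
  proof -
    have "c * (b$i - s$i)\<^sup>2 \<le> (norm (column i X))\<^sup>2/4 * (b$i - s$i)\<^sup>2"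
      using c by (intro mult_right_mono) auto
    with cd_step[OF lam, where b=b and i=i and s=s and X=X and y=y] cd show ?thesis by auto
  qed
  have claim: "\<forall>i. card {j. j < i} = n \<longrightarrow>
     lasso_obj X y lam (cd_point b i (b$i) s) + c * (\<Sum>j\<in>{..i}. (b$j - s$j)\<^sup>2) \<le> lasso_obj X y lam s" for n
  proof (induction n)
    case 0
    show ?case
    proof (intro allI impI)
      fix i :: 'p assume "card {j. j < i} = 0"
      then have e: "{j. j < i} = {}" by simp
      have q: "cd_point b i (s$i) s = s"
        using e by (auto simp: cd_point_def vec_eq_iff)
      have at: "{..i} = {i}" using e by (auto simp: order_le_less)
      show "lasso_obj X y lam (cd_point b i (b$i) s) + c * (\<Sum>j\<in>{..i}. (b$j - s$j)\<^sup>2) \<le> lasso_obj X y lam s"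
        using step[of i] unfolding q at by simp
    qed
  next
    case (Suc n)
    show ?case
    proof (intro allI impI)
      fix i :: 'p assume ci: "card {j. j < i} = Suc n"
      then have ne: "{j. j < i} \<noteq> {}" by (metis card.empty nat.simps(3))
      define m where "m = Max {j. j < i}"
      have mi: "m < i" using ne unfolding m_def by (metis (mono_tags) Max_in finite mem_Collect_eq)
      have mx: "j < i \<Longrightarrow> j \<le> m" for j unfolding m_def by (simp)
      have ins: "{j. j < i} = insert m {j. j < m}" using mi mx by (auto simp: order_le_less)
      have "card {j. j < m} = n" using ci unfolding ins by simp
      then have IH: "lasso_obj X y lam (cd_point b m (b$m) s) + c * (\<Sum>j\<in>{..m}. (b$j - s$j)\<^sup>2) \<le> lasso_obj X y lam s"
        using Suc.IH by blast
      have q: "cd_point b i (s$i) s = cd_point b m (b$m) s"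
        unfolding cd_point_def vec_eq_iff
      proof (intro allI)
        fix j :: 'p
        consider "j < m" | "j = m" | "m < j" by fastforce
        then show "(\<chi> j. if j < i then b $ j else if j = i then s $ i else s $ j) $ j =
              (\<chi> j. if j < m then b $ j else if j = m then b $ m else s $ j) $ j"
        proof cases
          case 1 then have "j < i" using mi by (rule less_trans)
          then show ?thesis using 1 by simp
        next
          case 2 then show ?thesis using mi by simp
        next
          case 3
          then have "\<not> j < i" using mx by (meson leD)
          moreover have "\<not> j < m" "j \<noteq> m" "m \<noteq> i" "\<not> i < m" using 3 mi by auto
          ultimately show ?thesis by simp
        qed
      qed
      have at: "{..i} = insert i {..m}" using mi mx by (auto simp: order_le_less)
      have "(\<Sum>j\<in>{..i}. (b$j - s$j)\<^sup>2) = (b$i - s$i)\<^sup>2 + (\<Sum>j\<in>{..m}. (b$j - s$j)\<^sup>2)"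
        unfolding at using mi by (subst sum.insert) auto
      then show "lasso_obj X y lam (cd_point b i (b$i) s) + c * (\<Sum>j\<in>{..i}. (b$j - s$j)\<^sup>2) \<le> lasso_obj X y lam s"
        using step[of i] IH unfolding q by (simp add: distrib_left)
    qed
  qed
  define M :: 'p where "M = Max UNIV"
  have "j \<le> M" for j unfolding M_def by simp
  then have bm: "cd_point b M (b$M) s = b" and um: "{..M} = UNIV"
    by (auto simp: cd_point_def vec_eq_iff) (metis le_less)
  have "lasso_obj X y lam (cd_point b M (b$M) s) + c * (\<Sum>j\<in>{..M}. (b$j - s$j)\<^sup>2) \<le> lasso_obj X y lam s"
    using claim[of "card {j. j < M}"] by blast
  then show ?thesis unfolding bm um .
qed


lemma abs_axis:
  "(\<Sum>j\<in>UNIV. \<bar>(v + t *\<^sub>R axis i 1) $ j\<bar>) = (\<Sum>j\<in>UNIV. \<bar>v$j\<bar>) + (\<bar>v$i + t\<bar> - \<bar>v$i\<bar>)"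
proof -
  have "(\<Sum>j\<in>UNIV. \<bar>(v + t *\<^sub>R axis i 1) $ j\<bar>) = (\<Sum>j\<in>UNIV. \<bar>v$j\<bar> + (if j = i then \<bar>v$i + t\<bar> - \<bar>v$i\<bar> else 0))"
    by (intro sum.cong) (auto simp: axis_def)
  then show ?thesis by (simp add: sum.distrib)
qed

lemma mv_sum: "inner r ((X::real^'p^'n) *v d) = (\<Sum>i\<in>UNIV. d$i * inner r (column i X))"
  by (simp add: matrix_mult_sum scalar_mult_eq_scaleR inner_sum_right)

lemma coord_global:
  fixes X :: "real^'p^'n"
  assumes lam: "lam \<ge> 0"
    and cw: "\<forall>i t. lasso_obj X y lam bb \<le> lasso_obj X y lam (bb + t *\<^sub>R axis i 1)"
  shows "lasso_obj X y lam bb \<le> lasso_obj X y lam b"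
proof -
  define d where "d = b - bb"
  define r where "r = X *v bb - y"
  define A where "A = (\<Sum>i\<in>UNIV. \<bar>bb$i\<bar>)"
  define C where "C = (1/2) * (\<Sum>i\<in>UNIV. (d$i)\<^sup>2 * (norm (column i X))\<^sup>2)"
  define I where "I = inner r (X *v d)"
  define N where "N = (norm (X *v d))\<^sup>2"
  have C0: "C \<ge> 0" unfolding C_def by (intro mult_nonneg_nonneg sum_nonneg) auto
  have N0: "N \<ge> 0" unfolding N_def by simp
  have fbb: "lasso_obj X y lam bb = 1/2 * (norm r)\<^sup>2 + lam * A" by (simp add: lasso_obj_def r_def A_def)
  have fexp: "lasso_obj X y lam (bb + t *\<^sub>R d) = 1/2 * (norm r)\<^sup>2 + t * I + 1/2 * t\<^sup>2 * N + lam * (\<Sum>i\<in>UNIV. \<bar>bb$i + t * d$i\<bar>)" for t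
  proof -
    have "(norm (X *v (bb + t *\<^sub>R d) - y))\<^sup>2 = (norm r)\<^sup>2 + 2 * (t * I) + t\<^sup>2 * N"
      using quad_expand[of X bb "t *\<^sub>R d" y]
      by (simp add: r_def I_def N_def matrix_vector_mult_scaleR power_mult_distrib)
    then show ?thesis by (simp add: lasso_obj_def algebra_simps)
  qed
  have fb: "lasso_obj X y lam b = 1/2 * (norm r)\<^sup>2 + I + 1/2 * N + lam * (\<Sum>i\<in>UNIV. \<bar>bb$i + d$i\<bar>)"
    using fexp[of 1] by (simp add: d_def)
  have key2: "lasso_obj X y lam bb - C * t\<^sup>2 \<le> lasso_obj X y lam (bb + t *\<^sub>R d)" for t
  proof -
    have ci: "0 \<le> t * d$i * inner r (column i X) + 1/2 * (t * d$i)\<^sup>2 * (norm (column i X))\<^sup>2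
                + lam * (\<bar>bb$i + t * d$i\<bar> - \<bar>bb$i\<bar>)" for i
    proof -
      have "(norm (X *v (bb + (t * d$i) *\<^sub>R axis i 1) - y))\<^sup>2 = (norm r)\<^sup>2 + 2 * (t * d$i * inner r (column i X)) + (t * d$i)\<^sup>2 * (norm (column i X))\<^sup>2"
        using quad_expand[of X bb "(t * d$i) *\<^sub>R axis i 1" y]
        by (simp add: r_def mv_axis power_mult_distrib)
      then have "lasso_obj X y lam (bb + (t * d$i) *\<^sub>R axis i 1) = 1/2 * ((norm r)\<^sup>2 + 2 * (t * d$i * inner r (column i X)) + (t * d$i)\<^sup>2 * (norm (column i X))\<^sup>2) + lam * (A + (\<bar>bb$i + t * d$i\<bar> - \<bar>bb$i\<bar>))"
        unfolding lasso_obj_def abs_axis A_def[symmetric] by simp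
      moreover have "lasso_obj X y lam bb \<le> lasso_obj X y lam (bb + (t * d$i) *\<^sub>R axis i 1)" using cw by blast
      ultimately show ?thesis using fbb by (simp add: algebra_simps)
    qed
    have S1: "(\<Sum>i\<in>UNIV. t * d$i * inner r (column i X)) = t * I"
      by (simp add: I_def mv_sum sum_distrib_left mult.assoc)
    have S2: "(\<Sum>i\<in>UNIV. 1/2 * (t * d$i)\<^sup>2 * (norm (column i X))\<^sup>2) = C * t\<^sup>2"
      by (simp add: C_def sum_distrib_left sum_distrib_right power_mult_distrib algebra_simps)
    have S3: "(\<Sum>i\<in>UNIV. lam * (\<bar>bb$i + t * d$i\<bar> - \<bar>bb$i\<bar>)) = lam * (\<Sum>i\<in>UNIV. \<bar>bb$i + t * d$i\<bar>) - lam * A"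
      by (simp add: A_def sum_distrib_left[symmetric] sum_subtractf right_diff_distrib)
    have "0 \<le> (\<Sum>i\<in>UNIV. t * d$i * inner r (column i X) + 1/2 * (t * d$i)\<^sup>2 * (norm (column i X))\<^sup>2
                + lam * (\<bar>bb$i + t * d$i\<bar> - \<bar>bb$i\<bar>))"
      using ci by (intro sum_nonneg) auto
    also have "\<dots> = t * I + C * t\<^sup>2 + (lam * (\<Sum>i\<in>UNIV. \<bar>bb$i + t * d$i\<bar>) - lam * A)"
      unfolding sum.distrib S1 S2 S3 ..
    finally have "0 \<le> t * I + C * t\<^sup>2 + (lam * (\<Sum>i\<in>UNIV. \<bar>bb$i + t * d$i\<bar>) - lam * A)" .
    moreover have "0 \<le> 1/2 * t\<^sup>2 * N" using N0 by simp
    ultimately show ?thesis unfolding fexp fbb by linarith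
  qed
  have key1: "lasso_obj X y lam (bb + t *\<^sub>R d) \<le> lasso_obj X y lam bb + t * (lasso_obj X y lam b - lasso_obj X y lam bb)"
    if t0: "0 \<le> t" and t1: "t \<le> 1" for t
  proof -
    have ab: "\<bar>bb$i + t * d$i\<bar> \<le> (1 - t) * \<bar>bb$i\<bar> + t * \<bar>bb$i + d$i\<bar>" for i
    proof -
      have "bb$i + t * d$i = (1 - t) * bb$i + t * (bb$i + d$i)" by (simp add: algebra_simps)
      then have "\<bar>bb$i + t * d$i\<bar> \<le> \<bar>(1 - t) * bb$i\<bar> + \<bar>t * (bb$i + d$i)\<bar>" by (metis abs_triangle_ineq)
      then show ?thesis using t0 t1 by (simp add: abs_mult)
    qed
    have "(\<Sum>i\<in>UNIV. \<bar>bb$i + t * d$i\<bar>) \<le> (\<Sum>i\<in>UNIV. (1 - t) * \<bar>bb$i\<bar> + t * \<bar>bb$i + d$i\<bar>)"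
      using ab by (intro sum_mono) auto
    also have "\<dots> = (1 - t) * A + t * (\<Sum>i\<in>UNIV. \<bar>bb$i + d$i\<bar>)"
      by (simp add: A_def sum.distrib sum_distrib_left)
    finally have "lam * (\<Sum>i\<in>UNIV. \<bar>bb$i + t * d$i\<bar>) \<le> lam * ((1 - t) * A + t * (\<Sum>i\<in>UNIV. \<bar>bb$i + d$i\<bar>))"
      using lam by (rule mult_left_mono)
    moreover have "t\<^sup>2 * N \<le> t * N" using t0 t1 N0 by (simp add: power2_eq_square mult_right_mono mult_left_le_one_le)
    ultimately show ?thesis unfolding fexp fb fbb by (simp add: algebra_simps)
  qed
  show ?thesis
  proof (rule ccontr)
    assume neg: "\<not> lasso_obj X y lam bb \<le> lasso_obj X y lam b"
    define e where "e = lasso_obj X y lam bb - lasso_obj X y lam b"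
    have e0: "e > 0" using neg unfolding e_def by simp
    define t where "t = min 1 (e / (2 * C + 2))"
    have t0: "t > 0" using e0 C0 unfolding t_def by simp
    have t1: "t \<le> 1" unfolding t_def by simp
    have te: "t \<le> e / (2 * C + 2)" unfolding t_def by simp
    have "lasso_obj X y lam bb - C * t\<^sup>2 \<le> lasso_obj X y lam bb - t * e"
      using key1[OF less_imp_le[OF t0] t1] key2[of t] unfolding e_def by (simp add: algebra_simps)
    then have "t * e \<le> t * (C * t)" by (simp add: power2_eq_square algebra_simps)
    then have "e \<le> C * t" using t0 by simp
    also have "\<dots> \<le> C * (e / (2 * C + 2))" using te C0 by (rule mult_left_mono)
    also have "\<dots> < e" using C0 e0 by (simp add: field_simps add_nonneg_pos)
    finally show False by simp
  qed
qed

theorem theorem3: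
  fixes X :: "real^('p::{finite,linorder})^'n"
    and y :: "real^'n" and lam :: real
    and beta s h :: "nat \<Rightarrow> real^('p::{finite,linorder})" and alpha :: "nat \<Rightarrow> real"
  assumes cols: "\<forall>i. norm (column i X) \<noteq> 0"
    and lam: "lam \<ge> 0"
    and s0: "s 0 = 0" and beta0: "beta 0 = 0"
    and cd: "\<forall>k\<ge>1. \<forall>i. \<forall>t.
               lasso_obj X y lam (cd_point (beta k) i (beta k $ i) (s (k - 1)))
                 \<le> lasso_obj X y lam (cd_point (beta k) i t (s (k - 1)))"
    and scheme: "(\<forall>k\<ge>1. h k = s (k - 1)) \<or> (\<forall>k\<ge>1. h k = beta (k - 1))"
    and alpha_min: "\<forall>k\<ge>1. \<forall>a.
               lasso_obj X y lam ((1 - alpha k) *\<^sub>R h k + alpha k *\<^sub>R beta k)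
                 \<le> lasso_obj X y lam ((1 - a) *\<^sub>R h k + a *\<^sub>R beta k)"
    and s_def: "\<forall>k\<ge>1. s k = (1 - alpha k) *\<^sub>R h k + alpha k *\<^sub>R beta k"
  shows "(\<forall>k\<ge>1. lasso_obj X y lam (s (k - 1)) \<ge> lasso_obj X y lam (beta k)
              \<and> lasso_obj X y lam (beta k) \<ge> lasso_obj X y lam (s k)
              \<and> lasso_obj X y lam (s k) \<ge> lasso_obj X y lam (beta (k + 1)))
       \<and> (\<forall>k\<ge>1. lasso_obj X y lam (s (k - 1)) = lasso_obj X y lam (beta k) \<longrightarrow>
              s (k - 1) = beta k \<and> (\<forall>b. lasso_obj X y lam (beta k) \<le> lasso_obj X y lam b))
       \<and> (\<exists>b0. (\<forall>b. lasso_obj X y lam b0 \<le> lasso_obj X y lam b)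
              \<and> (\<lambda>k. lasso_obj X y lam (beta k)) \<longlonglongrightarrow> lasso_obj X y lam b0)"
proof -
  let ?f = "lasso_obj X y lam"
  define c where "c = Min (range (\<lambda>i. (norm (column i X))\<^sup>2/4))"
  have cle: "\<forall>i. c \<le> (norm (column i X))\<^sup>2/4"
  proof
    fix i show "c \<le> (norm (column i X))\<^sup>2/4" unfolding c_def by (rule Min_le) auto
  qed
  have c0: "c > 0" unfolding c_def using cols by (subst Min_gr_iff) auto
  have cdk: "\<forall>i t. ?f (cd_point (beta k) i (beta k $ i) (s (k-1))) \<le> ?f (cd_point (beta k) i t (s (k-1)))"
    if "k \<ge> 1" for k using cd that by blast
  have tel: "?f (beta k) + c * (\<Sum>i\<in>UNIV. (beta k $ i - s (k-1) $ i)\<^sup>2) \<le> ?f (s (k-1))"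
    if "k \<ge> 1" for k by (rule cd_telescope[OF lam cdk[OF that] cle])
  have sq0: "0 \<le> c * (\<Sum>i\<in>UNIV. (beta k $ i - s (k-1) $ i)\<^sup>2)" for k
    using c0 by (intro mult_nonneg_nonneg sum_nonneg) auto
  have A: "?f (beta k) \<le> ?f (s (k-1))" if "k \<ge> 1" for k using tel[OF that] sq0[of k] by linarith
  have B: "?f (s k) \<le> ?f (beta k)" if "k \<ge> 1" for k
  proof -
    have "?f (s k) \<le> ?f ((1 - 1) *\<^sub>R h k + 1 *\<^sub>R beta k)"
      using alpha_min s_def that by metis
    then show ?thesis by simp
  qed
  have part1: "\<forall>k\<ge>1. ?f (s (k - 1)) \<ge> ?f (beta k) \<and> ?f (beta k) \<ge> ?f (s k) \<and> ?f (s k) \<ge> ?f (beta (k + 1))"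
  proof (intro allI impI conjI)
    fix k :: nat assume k: "k \<ge> 1"
    show "?f (s (k - 1)) \<ge> ?f (beta k)" using A[OF k] .
    show "?f (beta k) \<ge> ?f (s k)" using B[OF k] .
    show "?f (s k) \<ge> ?f (beta (k + 1))" using A[of "k+1"] by simp
  qed
  have part2: "\<forall>k\<ge>1. ?f (s (k - 1)) = ?f (beta k) \<longrightarrow> s (k - 1) = beta k \<and> (\<forall>b. ?f (beta k) \<le> ?f b)"
  proof (intro allI impI)
    fix k :: nat assume k: "1 \<le> k" and eq: "?f (s (k-1)) = ?f (beta k)"
    have "c * (\<Sum>i\<in>UNIV. (beta k $ i - s (k-1) $ i)\<^sup>2) \<le> 0" using tel[OF k] eq by simp
    then have "(\<Sum>i\<in>UNIV. (beta k $ i - s (k-1) $ i)\<^sup>2) \<le> 0" using c0 by (simp add: mult_le_0_iff)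
    moreover have "0 \<le> (\<Sum>i\<in>UNIV. (beta k $ i - s (k-1) $ i)\<^sup>2)" by (intro sum_nonneg) auto
    ultimately have "(\<Sum>i\<in>UNIV. (beta k $ i - s (k-1) $ i)\<^sup>2) = 0" by linarith
    then have "\<forall>i\<in>UNIV. (beta k $ i - s (k-1) $ i)\<^sup>2 = 0"
      by (subst (asm) sum_nonneg_eq_0_iff) auto
    then have sb: "s (k-1) = beta k" by (simp add: vec_eq_iff)
    have cw: "\<forall>i t. ?f (beta k) \<le> ?f (beta k + t *\<^sub>R axis i 1)"
    proof (intro allI)
      fix i t
      have e1: "cd_point (beta k) i (beta k $ i) (beta k) = beta k" by (simp add: cd_point_def vec_eq_iff)
      have e2: "cd_point (beta k) i (beta k $ i + t) (beta k) = beta k + t *\<^sub>R axis i 1"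
        by (simp add: cd_point_def vec_eq_iff axis_def)
      show "?f (beta k) \<le> ?f (beta k + t *\<^sub>R axis i 1)"
        using cdk[OF k] unfolding sb by (metis e1 e2)
    qed
    show "s (k - 1) = beta k \<and> (\<forall>b. ?f (beta k) \<le> ?f b)"
      using coord_global[OF lam cw] sb by blast
  qed
  have part3: "\<exists>b0. (\<forall>b. ?f b0 \<le> ?f b) \<and> (\<lambda>k. ?f (beta k)) \<longlonglongrightarrow> ?f b0"
  proof -
    have fsb: "?f (s n) \<le> ?f (beta n)" for n
      using B[of n] s0 beta0 by (cases n) auto
    have dec: "decseq (\<lambda>n. ?f (beta n))"
    proof (rule decseq_SucI)
      fix n show "?f (beta (Suc n)) \<le> ?f (beta n)" using A[of "Suc n"] fsb[of n] by simp
    qed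
    obtain Lm where Lm: "(\<lambda>n. ?f (beta n)) \<longlonglongrightarrow> Lm"
    proof -
      have nn: "\<forall>i. 0 \<le> ?f (beta i)" by (intro allI lo_nonneg[OF lam])
      show ?thesis using decseq_convergent[OF dec nn] that by blast
    qed
    have Lb1: "(\<lambda>n. ?f (beta (Suc n))) \<longlonglongrightarrow> Lm" using LIMSEQ_Suc[OF Lm] .
    have Ls: "(\<lambda>n. ?f (s n)) \<longlonglongrightarrow> Lm"
    proof (rule tendsto_sandwich[OF _ _ Lb1 Lm])
      have "?f (beta (Suc n)) \<le> ?f (s n)" for n using A[of "Suc n"] by simp
      then show "\<forall>\<^sub>F n in sequentially. ?f (beta (Suc n)) \<le> ?f (s n)" by (intro always_eventually allI)
      show "\<forall>\<^sub>F n in sequentially. ?f (s n) \<le> ?f (beta n)" using fsb by (intro always_eventually allI)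
    qed
    define D where "D n = (\<Sum>i\<in>UNIV. (beta (Suc n) $ i - s n $ i)\<^sup>2)" for n
    have Dle: "D n \<le> (?f (s n) - ?f (beta (Suc n))) / c" for n
    proof -
      have "c * D n \<le> ?f (s n) - ?f (beta (Suc n))" using tel[of "Suc n"] by (simp add: D_def)
      then show ?thesis using c0 by (simp add: pos_le_divide_eq mult.commute)
    qed
    have D0: "D \<longlonglongrightarrow> 0"
    proof (rule tendsto_sandwich[of "\<lambda>n. 0" _ _ "\<lambda>n. (?f (s n) - ?f (beta (Suc n))) / c"])
      show "\<forall>\<^sub>F n in sequentially. 0 \<le> D n" unfolding D_def by (intro always_eventually allI sum_nonneg) auto
      show "\<forall>\<^sub>F n in sequentially. D n \<le> (?f (s n) - ?f (beta (Suc n))) / c" using Dle by auto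
      show "(\<lambda>n. 0) \<longlonglongrightarrow> (0::real)" by simp
      have "(\<lambda>n. (?f (s n) - ?f (beta (Suc n))) / c) \<longlonglongrightarrow> (Lm - Lm) / c"
        using c0 by (intro tendsto_intros Ls Lb1) simp
      then show "(\<lambda>n. (?f (s n) - ?f (beta (Suc n))) / c) \<longlonglongrightarrow> 0" by simp
    qed
    define W where "W n = s n - beta (Suc n)" for n
    have Wj: "(\<lambda>n. W n $ j) \<longlonglongrightarrow> 0" for j
    proof (rule Lim_null_comparison[of _ "\<lambda>n. sqrt (D n)"])
      show "\<forall>\<^sub>F n in sequentially. norm (W n $ j) \<le> sqrt (D n)"
      proof (intro always_eventually allI)
        fix n
        have "(W n $ j)\<^sup>2 \<le> D n" unfolding D_def W_def
          using member_le_sum[of j UNIV "\<lambda>i. (beta (Suc n) $ i - s n $ i)\<^sup>2"]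
          by (simp add: power2_commute)
        then show "norm (W n $ j) \<le> sqrt (D n)" using real_le_rsqrt by simp
      qed
      show "(\<lambda>n. sqrt (D n)) \<longlonglongrightarrow> 0" using tendsto_real_sqrt[OF D0] by simp
    qed
    define E where "E i n = (\<chi> j. if i < j then W n $ j else 0)" for i n
    have E0: "(\<lambda>n. E i n) \<longlonglongrightarrow> 0" for i
    proof -
      have "(\<lambda>n. E i n) \<longlonglongrightarrow> (\<chi> j. 0)"
        unfolding E_def
      proof (rule tendsto_vec_lambda)
        fix j show "(\<lambda>n. if i < j then W n $ j else 0) \<longlonglongrightarrow> 0"
          by (cases "i < j") (simp_all add: Wj)
      qed
      moreover have "(\<chi> j. 0) = (0::real^('p::{finite,linorder}))" by (simp add: vec_eq_iff)
      ultimately show ?thesis by simp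
    qed
    have cdE: "cd_point (beta (Suc n)) i t (s n) = beta (Suc n) + E i n + (t - beta (Suc n) $ i) *\<^sub>R axis i 1" for n i t
      by (auto simp: cd_point_def E_def W_def vec_eq_iff axis_def)
    define LL where "LL v = (X *v v, lam *\<^sub>R v)" for v
    define FF where "FF p = 1/2 * (norm (fst p - y))\<^sup>2 + (\<Sum>i\<in>UNIV. \<bar>snd p $ i\<bar>)" for p :: "(real^'n) \<times> (real^('p::{finite,linorder}))"
    have fF: "?f v = FF (LL v)" for v
      using lam by (simp add: lasso_obj_def FF_def LL_def abs_mult sum_distrib_left)
    have LLadd: "LL (a + b) = LL a + LL b" for a b by (simp add: LL_def matrix_vector_right_distrib scaleR_add_right)
    have LLsc: "LL (t *\<^sub>R a) = t *\<^sub>R LL a" for t a by (simp add: LL_def matrix_vector_mult_scaleR)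
    have linL: "linear LL" by (rule linearI) (simp_all add: LLadd LLsc)
    have contL: "isCont LL v" for v
      using linear_continuous_at linear_conv_bounded_linear linL by blast
    have contFF: "continuous_on UNIV FF" unfolding FF_def by (intro continuous_intros)
    have FFlim: "(\<lambda>n. FF (g n)) \<longlonglongrightarrow> FF l" if "g \<longlonglongrightarrow> l" for g l
      using continuous_on_tendsto_compose[OF contFF that] by simp
    define f0 where "f0 = ?f (beta 0)"
    have fle: "?f (beta n) \<le> f0" for n using dec unfolding f0_def by (simp add: decseq_def)
    have bnd_pt: "norm (LL b) \<le> sqrt (2 * f0) + norm y + f0" if "?f b \<le> f0" for b
    proof -
      have abs0: "0 \<le> lam * (\<Sum>i\<in>UNIV. \<bar>b $ i\<bar>)" using lam by (simp add: sum_nonneg)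
      have "(norm (X *v b - y))\<^sup>2 \<le> 2 * f0" using that abs0 unfolding lasso_obj_def by simp
      then have n1: "norm (X *v b - y) \<le> sqrt (2 * f0)" by (rule real_le_rsqrt)
      have "norm (X *v b) \<le> norm (X *v b - y) + norm y" using norm_triangle_ineq[of "X *v b - y" y] by simp
      then have n2: "norm (X *v b) \<le> sqrt (2 * f0) + norm y" using n1 by simp
      have "norm (lam *\<^sub>R b) = lam * norm b" using lam by simp
      also have "\<dots> \<le> lam * (\<Sum>i\<in>UNIV. \<bar>b $ i\<bar>)" by (rule mult_left_mono[OF norm_le_l1_cart lam])
      also have "\<dots> \<le> ?f b" unfolding lasso_obj_def by simp
      finally have n3: "norm (lam *\<^sub>R b) \<le> f0" using that by simp
      have "norm (LL b) \<le> norm (X *v b) + norm (lam *\<^sub>R b)" unfolding LL_def by (rule norm_Pair_le)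
      then show ?thesis using n2 n3 by simp
    qed
    have bnd: "bounded (range (\<lambda>n. LL (beta (Suc n))))"
      unfolding bounded_iff
    proof (intro exI ballI)
      fix x assume "x \<in> range (\<lambda>n. LL (beta (Suc n)))"
      then obtain n where "x = LL (beta (Suc n))" by blast
      then show "norm x \<le> sqrt (2 * f0) + norm y + f0" using bnd_pt[OF fle[of "Suc n"]] by simp
    qed
    obtain z r where r: "strict_mono r" and conv: "((\<lambda>n. LL (beta (Suc n))) \<circ> r) \<longlonglongrightarrow> z"
      using bounded_imp_convergent_subsequence[OF bnd] by blast
    have clo: "closed (range LL)"
      by (rule closed_subspace) (rule linear_subspace_image[OF linL subspace_UNIV])
    have "z \<in> range LL"
      by (rule closed_sequential_limits[THEN iffD1, OF clo, rule_format, OF conjI[OF _ conv]]) simp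
    then obtain b0 where z: "z = LL b0" by blast
    have coord: "\<forall>i t. ?f b0 \<le> ?f (b0 + t *\<^sub>R axis i 1)"
    proof (intro allI)
      fix i :: 'p and t :: real
      have c1: "(\<lambda>n. LL (beta (Suc (r n)))) \<longlonglongrightarrow> z" using conv by (simp add: o_def)
      have c2: "(\<lambda>n. LL (E i (r n))) \<longlonglongrightarrow> LL 0"
        using isCont_tendsto_compose[OF contL LIMSEQ_subseq_LIMSEQ[OF E0 r, unfolded o_def]] .
      have L0: "LL 0 = 0" by (simp add: LL_def zero_prod_def)
      have l1: "(\<lambda>n. FF (LL (beta (Suc (r n))) + LL (E i (r n)))) \<longlonglongrightarrow> FF (z + 0)"
        by (rule FFlim) (intro tendsto_intros c1 c2[unfolded L0])
      have l2: "(\<lambda>n. FF (LL (beta (Suc (r n))) + LL (E i (r n)) + t *\<^sub>R LL (axis i 1))) \<longlonglongrightarrow> FF (z + 0 + t *\<^sub>R LL (axis i 1))"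
        by (rule FFlim) (intro tendsto_intros c1 c2[unfolded L0])
      have le: "FF (LL (beta (Suc (r n))) + LL (E i (r n))) \<le> FF (LL (beta (Suc (r n))) + LL (E i (r n)) + t *\<^sub>R LL (axis i 1))" for n
      proof -
        let ?k = "Suc (r n)"
        have "?f (cd_point (beta ?k) i (beta ?k $ i) (s (?k - 1))) \<le> ?f (cd_point (beta ?k) i (beta ?k $ i + t) (s (?k - 1)))"
          using cdk[of ?k] by simp
        then show ?thesis unfolding fF by (simp add: cdE LLadd LLsc)
      qed
      have "FF (z + 0) \<le> FF (z + 0 + t *\<^sub>R LL (axis i 1))"
        using LIMSEQ_le[OF l1 l2] le by blast
      then show "?f b0 \<le> ?f (b0 + t *\<^sub>R axis i 1)" unfolding fF z by (simp add: LLadd LLsc)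
    qed
    have glob: "\<forall>b. ?f b0 \<le> ?f b" using coord_global[OF lam coord] by blast
    have "(\<lambda>n. ?f (beta (Suc (r n)))) \<longlonglongrightarrow> ?f b0"
      unfolding fF z[symmetric] by (rule FFlim) (use conv in \<open>simp add: o_def\<close>)
    moreover have "(\<lambda>n. ?f (beta (Suc (r n)))) \<longlonglongrightarrow> Lm"
      using LIMSEQ_subseq_LIMSEQ[OF Lb1 r] by (simp add: o_def)
    ultimately have "Lm = ?f b0" using LIMSEQ_unique by blast
    then show ?thesis using glob Lm by blast
  qed
  show ?thesis using part1 part2 part3 by blast
qed

end
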